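(* Let $X$ be a Hausdorff space which admits a continuous map $f:X\to X$ without fixed points. Then there exist $m,l\in X$ such that the man has a strategy in $X$ for the starting points $m$ (man) and $l$ (lion).
   Context: For a topological space $X$ and $x\in X$, let $P_x(X)$ be the set of continuous maps $\gamma:[0,+\infty)\to X$ with $\gamma(0)=x$. For $\gamma\in P_x(X)$ and $t\ge 0$, write $\gamma_{<t}=\gamma|_{[0,t)}$ and $\gamma_{\le t}=\gamma|_{[0,t]}$. Given starting points $m$ (man) and $l$ (lion) in $X$, a strategy for the man is a function $S:P_l(X)\to P_m(X)$ such that (i) for each $\beta\in P_l(X)$ and each $t\ge 0$, $S(\beta)(t)\neq\beta(t)$; and (ii) (no-lookahead rule) whenever $\beta,\beta'\in P_l(X)$ and $t\ge0$ satisfy $\beta_{<t}=\beta'_{<t}$, then $S(\beta)_{\le t}=S(\beta')_{\le t}$. *)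

theory Defs
  imports "HOL-Analysis.Analysis"
begin

text \<open>Paths in the ambient space (the type 'a) starting at x, parametrised by [0,+\<infinity>).
  Values at negative times are irrelevant (never inspected).\<close>
definition paths_from :: "'a::topological_space \<Rightarrow> (real \<Rightarrow> 'a) set" where
  "paths_from x = {\<gamma>. continuous_on {0..} \<gamma> \<and> \<gamma> 0 = x}"

definition man_strategy ::
  "'a::topological_space \<Rightarrow> 'a \<Rightarrow> ((real \<Rightarrow> 'a) \<Rightarrow> (real \<Rightarrow> 'a)) \<Rightarrow> bool" where
  "man_strategy m l S \<longleftrightarrow>
     (\<forall>\<beta>\<in>paths_from l. S \<beta> \<in> paths_from m) \<and>
     (\<forall>\<beta>\<in>paths_from l. \<forall>t\<ge>0. S \<beta> t \<noteq> \<beta> t) \<and>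
     (\<forall>\<beta>\<in>paths_from l. \<forall>\<beta>'\<in>paths_from l. \<forall>t\<ge>0.
        (\<forall>s\<in>{0..<t}. \<beta> s = \<beta>' s) \<longrightarrow> (\<forall>s\<in>{0..t}. S \<beta> s = S \<beta>' s))"

definition man_has_strategy :: "'a::topological_space \<Rightarrow> 'a \<Rightarrow> bool" where
  "man_has_strategy m l \<longleftrightarrow> (\<exists>S. man_strategy m l S)"

end

theory Submission
  imports Defs
begin
lemma agree_at:
  fixes b b' :: "real \<Rightarrow> 'a::t2_space"
  assumes cb: "continuous_on {0..} b" and cb': "continuous_on {0..} b'"
    and b0: "b 0 = b' 0" and t: "t \<ge> 0" and eq: "\<forall>s\<in>{0..<t}. b s = b' s"
  shows "b t = b' t"
proof (cases "t = 0")
  case True thus ?thesis using b0 by simp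
next
  case False
  hence tp: "t > 0" using t by simp
  have l1: "(b \<longlongrightarrow> b t) (at t within {0..<t})"
  proof -
    have "(b \<longlongrightarrow> b t) (at t within {0..})" using cb t unfolding continuous_on_def by simp
    thus ?thesis by (rule tendsto_within_subset) auto
  qed
  have l2: "(b' \<longlongrightarrow> b' t) (at t within {0..<t})"
  proof -
    have "(b' \<longlongrightarrow> b' t) (at t within {0..})" using cb' t unfolding continuous_on_def by simp
    thus ?thesis by (rule tendsto_within_subset) auto
  qed
  have ev: "\<forall>\<^sub>F s in at t within {0..<t}. b' s = b s"
    using eq by (simp add: eventually_at_filter)
  have l3: "(b \<longlongrightarrow> b' t) (at t within {0..<t})"
    using tendsto_cong[OF ev] l2 by simp
  have nt: "at t within {0..<t} \<noteq> bot"
  proof -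
    have "t islimpt {0..<t}"
      using tp by simp
    thus ?thesis by (simp add: trivial_limit_within)
  qed
  show ?thesis using tendsto_unique[OF nt l1 l3] .
qed
theorem mainTheorem2:
  fixes f :: "'a::t2_space \<Rightarrow> 'a"
  assumes "continuous_on UNIV f"
    and "\<forall>x. f x \<noteq> x"
  shows "\<exists>m l :: 'a. man_has_strategy m l"
proof -
  obtain l :: 'a where True by simp
  have "man_strategy (f l) l (\<lambda>b. f \<circ> b)"
    unfolding man_strategy_def
  proof (intro conjI ballI allI impI)
    fix b assume "b \<in> paths_from l"
    hence "continuous_on {0..} b" "b 0 = l" unfolding paths_from_def by auto
    moreover have "continuous_on {0..} (f \<circ> b)"
      using continuous_on_compose[OF calculation(1) continuous_on_subset[OF assms(1)]] by simp
    ultimately show "f \<circ> b \<in> paths_from (f l)" unfolding paths_from_def by simp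
  next
    fix b t assume "b \<in> paths_from l" "(0::real) \<le> t"
    thus "(f \<circ> b) t \<noteq> b t" using assms(2) by simp
  next
    fix b b' t s assume h: "b \<in> paths_from l" "b' \<in> paths_from l" "(0::real) \<le> t"
      "\<forall>s\<in>{0..<t}. b s = b' s" "s \<in> {0..t}"
    show "(f \<circ> b) s = (f \<circ> b') s"
    proof (cases "s < t")
      case True thus ?thesis using h by auto
    next
      case False
      hence "s = t" using h by auto
      moreover have "b t = b' t"
        using h(4) h(3) agree_at[of b b' t] h(1,2) unfolding paths_from_def by simp
      ultimately show ?thesis by simp
    qed
  qed
  thus ?thesis unfolding man_has_strategy_def by blast
qed

end
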